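(* Let $OPT$ be the optimal value of Problem (A) and $ALG$ the system throughput of the assignment output by Algorithm 1 (described below). Then $ALG\ge \frac{1}{2}\mu\cdot OPT$, where $\mu$ is defined below with respect to any partition $(C_i)$ as in the definition.
   Context: Setting: SUs $S=\{s_1,\dots,s_N\}$, channels $\{1,\dots,M\}$; SU $s_i$ has integer sensing budget $0\le l_i\le M$, and $\sum_i l_i\ge M$. For each $i,k$ let $P_f^i(k),P_m^i(k)\in[0,1]$; let $T_c\in[0,1)$, $\pi_0(k)\in[0,1]$, $\gamma(k)>0$, $\theta_1(k)=(1-T_c)\pi_0(k)$, $\theta_2(k)=\gamma(k)(1-\pi_0(k))$. For nonempty $A\subseteq S$ and $y\in\{0,1\}^A$ put $P^k_0(y)=\prod_{s_i\in A,y_i=1}P_f^i(k)\prod_{s_i\in A,y_i=0}(1-P_f^i(k))$, $P^k_1(y)=\prod_{s_i\in A,y_i=1}(1-P_m^i(k))\prod_{s_i\in A,y_i=0}P_m^i(k)$, and $U_k(A)=\sum_{y}\max\{\theta_2(k)P^k_1(y),\theta_1(k)P^k_0(y)\}$; $U_k(\emptyset)=\theta_2(k)$. A sensing assignment $(S_1,\dots,S_M)$, $S_k\subseteq S$, is feasible if each $s_i$ lies in at most $l_i$ of the $S_k$. Problem (A): maximize $\sum_k U_k(S_k)$ over feasible assignments. Algorithm 1: Build the complete bipartite graph with vertices $s_i^j$ ($i=1..N$, $j=1..l_i$; copies of SU $s_i$) on one side and channels $c_1,\dots,c_M$ on the other, edge weights $w(s_i^j,c_k)=U_k(\{s_i\})$.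 Compute a maximum weight matching $\mathcal M$; set $S_k=\{s_i:(s_i^j,c_k)\in\mathcal M\}$. For each unmatched copy $s_i^j$ in arbitrary order, add $s_i$ to $S_{k^*}$ where $k^*$ maximizes $U_k(S_k\cup\{s_i\})-U_k(S_k)$ over channels $k$ with $s_i\notin S_k$. Let $U=\sum_k U_k(S_k)$. If $\max_k U_k(S)>U$, instead output the assignment $S_{k^*}=S$ for $k^*=\arg\max_k U_k(S)$ and $S_k=\emptyset$ for $k\ne k^*$; otherwise output $(S_1,\dots,S_M)$. Parameter $\mu$: let $U_k^0=\min_{s_i\in S}U_k(\{s_i\})$, $U_k^*=\max_{s_i\in S}U_k(\{s_i\})$. Partition the channels into groups $C_i$ ($s_i\in S$), each channel $k$ placed in a group $C_i$ with $U_k(\{s_i\})\ge U_k(\{s_j\})$ for all $j\neq i$ (ties broken arbitrarily); $r_i=|C_i|$. Let $C_i^{l_i}$ be the first $\min\{l_i,r_i\}$ channels of $C_i$ when sorted by $U_k^0$ in non-increasing order. For $r_i>0$ let $\lambda_i=\min\{l_i,r_i\}/r_i$ and, when $C_i^{l_i}\ne\emptyset$, $\rho_i=\min_{k\in C_i^{l_i}}U_k^*/U_k^0$. Then $\mu=1+\min_i\lambda_i(\rho_i-1)$ (so $\mu\in[1,2]$). *)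

theory Defs
  imports Main "HOL.Real"
begin

text \<open>SUs are indexed by 0..<N, channels by 0..<M. Sets of SUs are nat sets.
  A vector y in {0,1}^A is encoded by the subset Y of A where y_i = 1.\<close>

definition theta1 :: "real \<Rightarrow> (nat \<Rightarrow> real) \<Rightarrow> nat \<Rightarrow> real" where
  "theta1 Tc pi0 k = (1 - Tc) * pi0 k"

definition theta2 :: "(nat \<Rightarrow> real) \<Rightarrow> (nat \<Rightarrow> real) \<Rightarrow> nat \<Rightarrow> real" where
  "theta2 gamma pi0 k = gamma k * (1 - pi0 k)"

definition P0 :: "(nat \<Rightarrow> nat \<Rightarrow> real) \<Rightarrow> nat \<Rightarrow> nat set \<Rightarrow> nat set \<Rightarrow> real" where
  "P0 Pf k A Y = (\<Prod>i\<in>Y. Pf i k) * (\<Prod>i\<in>A - Y. 1 - Pf i k)"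

definition P1 :: "(nat \<Rightarrow> nat \<Rightarrow> real) \<Rightarrow> nat \<Rightarrow> nat set \<Rightarrow> nat set \<Rightarrow> real" where
  "P1 Pm k A Y = (\<Prod>i\<in>Y. 1 - Pm i k) * (\<Prod>i\<in>A - Y. Pm i k)"

definition Uk :: "(nat \<Rightarrow> nat \<Rightarrow> real) \<Rightarrow> (nat \<Rightarrow> nat \<Rightarrow> real) \<Rightarrow> real \<Rightarrow> (nat \<Rightarrow> real)
    \<Rightarrow> (nat \<Rightarrow> real) \<Rightarrow> nat \<Rightarrow> nat set \<Rightarrow> real" where
  "Uk Pf Pm Tc pi0 gamma k A =
     (if A = {} then theta2 gamma pi0 k
      else (\<Sum>Y\<in>Pow A. max (theta2 gamma pi0 k * P1 Pm k A Y) (theta1 Tc pi0 k * P0 Pf k A Y)))"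

definition total :: "nat \<Rightarrow> (nat \<Rightarrow> nat set \<Rightarrow> real) \<Rightarrow> (nat \<Rightarrow> nat set) \<Rightarrow> real" where
  "total M U S = (\<Sum>k<M. U k (S k))"

definition feasible :: "nat \<Rightarrow> nat \<Rightarrow> (nat \<Rightarrow> nat) \<Rightarrow> (nat \<Rightarrow> nat set) \<Rightarrow> bool" where
  "feasible N M l S \<longleftrightarrow> (\<forall>k<M. S k \<subseteq> {..<N}) \<and> (\<forall>i<N. card {k\<in>{..<M}. i \<in> S k} \<le> l i)"

definition OPT :: "nat \<Rightarrow> nat \<Rightarrow> (nat \<Rightarrow> nat) \<Rightarrow> (nat \<Rightarrow> nat set \<Rightarrow> real) \<Rightarrow> real" where
  "OPT N M l U = Max {total M U S | S. feasible N M l S}"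

definition copies :: "nat \<Rightarrow> (nat \<Rightarrow> nat) \<Rightarrow> (nat \<times> nat) set" where
  "copies N l = {c. fst c < N \<and> snd c < l (fst c)}"

definition is_matching :: "nat \<Rightarrow> nat \<Rightarrow> (nat \<Rightarrow> nat) \<Rightarrow> ((nat \<times> nat) \<times> nat) set \<Rightarrow> bool" where
  "is_matching N M l Mt \<longleftrightarrow>
     Mt \<subseteq> copies N l \<times> {..<M} \<and>
     (\<forall>c k k'. (c, k) \<in> Mt \<and> (c, k') \<in> Mt \<longrightarrow> k = k') \<and>
     (\<forall>c c' k. (c, k) \<in> Mt \<and> (c', k) \<in> Mt \<longrightarrow> c = c')"

definition mweight :: "(nat \<Rightarrow> nat set \<Rightarrow> real) \<Rightarrow> ((nat \<times> nat) \<times> nat) set \<Rightarrow> real" where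
  "mweight U Mt = (\<Sum>(c, k)\<in>Mt. U k {fst c})"

definition max_weight_matching ::
  "nat \<Rightarrow> nat \<Rightarrow> (nat \<Rightarrow> nat) \<Rightarrow> (nat \<Rightarrow> nat set \<Rightarrow> real) \<Rightarrow> ((nat \<times> nat) \<times> nat) set \<Rightarrow> bool" where
  "max_weight_matching N M l U Mt \<longleftrightarrow>
     is_matching N M l Mt \<and> (\<forall>Mt'. is_matching N M l Mt' \<longrightarrow> mweight U Mt' \<le> mweight U Mt)"

definition gain :: "(nat \<Rightarrow> nat set \<Rightarrow> real) \<Rightarrow> (nat \<Rightarrow> nat set) \<Rightarrow> nat \<Rightarrow> nat \<Rightarrow> real" where
  "gain U S i k = U k (insert i (S k)) - U k (S k)"

inductive greedy_run ::
  "nat \<Rightarrow> (nat \<Rightarrow> nat set \<Rightarrow> real) \<Rightarrow> (nat \<Rightarrow> nat set) \<Rightarrow> (nat \<times> nat) list \<Rightarrow> (nat \<Rightarrow> nat set) \<Rightarrow> bool"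
  for M U where
  greedy_nil: "greedy_run M U S [] S"
| greedy_cons: "\<lbrakk> k < M; fst c \<notin> S k;
     \<forall>k'<M. fst c \<notin> S k' \<longrightarrow> gain U S (fst c) k' \<le> gain U S (fst c) k;
     greedy_run M U (S(k := insert (fst c) (S k))) cs S' \<rbrakk>
   \<Longrightarrow> greedy_run M U S (c # cs) S'"

definition alg_output ::
  "nat \<Rightarrow> nat \<Rightarrow> (nat \<Rightarrow> nat) \<Rightarrow> (nat \<Rightarrow> nat set \<Rightarrow> real) \<Rightarrow> (nat \<Rightarrow> nat set) \<Rightarrow> bool" where
  "alg_output N M l U Sout \<longleftrightarrow>
     (\<exists>Mt ord Sg.
        max_weight_matching N M l U Mt \<and>
        distinct ord \<and> set ord = {c \<in> copies N l. \<not> (\<exists>k. (c, k) \<in> Mt)} \<and>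
        greedy_run M U (\<lambda>k. {i. \<exists>j. ((i, j), k) \<in> Mt}) ord Sg \<and>
        (if (\<exists>k<M. U k {..<N} > total M U Sg)
         then (\<exists>ks<M. (\<forall>k<M. U k {..<N} \<le> U ks {..<N}) \<and>
                      Sout = (\<lambda>k. if k = ks then {..<N} else {}))
         else Sout = Sg))"

definition Ustar :: "nat \<Rightarrow> (nat \<Rightarrow> nat set \<Rightarrow> real) \<Rightarrow> nat \<Rightarrow> real" where
  "Ustar N U k = Max ((\<lambda>i. U k {i}) ` {..<N})"

definition Uzero :: "nat \<Rightarrow> (nat \<Rightarrow> nat set \<Rightarrow> real) \<Rightarrow> nat \<Rightarrow> real" where
  "Uzero N U k = Min ((\<lambda>i. U k {i}) ` {..<N})"

text \<open>A partition of channels into groups C_i is given by g: channel k lies in C_(g k).\<close>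

definition grp :: "nat \<Rightarrow> (nat \<Rightarrow> nat) \<Rightarrow> nat \<Rightarrow> nat set" where
  "grp M g i = {k \<in> {..<M}. g k = i}"

definition valid_partition :: "nat \<Rightarrow> nat \<Rightarrow> (nat \<Rightarrow> nat set \<Rightarrow> real) \<Rightarrow> (nat \<Rightarrow> nat) \<Rightarrow> bool" where
  "valid_partition N M U g \<longleftrightarrow> (\<forall>k<M. g k < N \<and> (\<forall>j<N. U k {j} \<le> U k {g k}))"

text \<open>T i = C_i^{l_i}: the first min(l_i, r_i) channels of C_i in a non-increasing order
  of U_k^0 (ties broken arbitrarily).\<close>

definition valid_top ::
  "nat \<Rightarrow> nat \<Rightarrow> (nat \<Rightarrow> nat) \<Rightarrow> (nat \<Rightarrow> nat set \<Rightarrow> real) \<Rightarrow> (nat \<Rightarrow> nat) \<Rightarrow> (nat \<Rightarrow> nat set) \<Rightarrow> bool" where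
  "valid_top N M l U g T \<longleftrightarrow>
     (\<forall>i<N. T i \<subseteq> grp M g i \<and> card (T i) = min (l i) (card (grp M g i)) \<and>
        (\<forall>k\<in>T i. \<forall>k'\<in>grp M g i - T i. Uzero N U k' \<le> Uzero N U k))"

definition lam :: "nat \<Rightarrow> (nat \<Rightarrow> nat) \<Rightarrow> (nat \<Rightarrow> nat) \<Rightarrow> nat \<Rightarrow> real" where
  "lam M l g i = real (min (l i) (card (grp M g i))) / real (card (grp M g i))"

definition rho :: "nat \<Rightarrow> (nat \<Rightarrow> nat set \<Rightarrow> real) \<Rightarrow> (nat \<Rightarrow> nat set) \<Rightarrow> nat \<Rightarrow> real" where
  "rho N U T i = Min ((\<lambda>k. Ustar N U k / Uzero N U k) ` T i)"

definition mu ::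
  "nat \<Rightarrow> nat \<Rightarrow> (nat \<Rightarrow> nat) \<Rightarrow> (nat \<Rightarrow> nat set \<Rightarrow> real) \<Rightarrow> (nat \<Rightarrow> nat) \<Rightarrow> (nat \<Rightarrow> nat set) \<Rightarrow> real" where
  "mu N M l U g T = 1 + Min {(if T i = {} then 0 else lam M l g i * (rho N U T i - 1)) | i.
                              i < N \<and> card (grp M g i) > 0}"

end

theory Submission imports Defs "HOL-Library.FuncSet" begin

lemma sum_Pow_insert:
  fixes F :: "nat set \<Rightarrow> real"
  assumes "finite A" "i \<notin> A"
  shows "sum F (Pow (insert i A)) = (\<Sum>Y\<in>Pow A. F Y + F (insert i Y))"
proof -
  have "sum F (Pow (insert i A)) = sum F (Pow A) + sum F (insert i ` Pow A)"
    unfolding Pow_insert by (rule sum.union_disjoint) (use assms in auto)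
  also have "sum F (insert i ` Pow A) = (\<Sum>Y\<in>Pow A. F (insert i Y))"
    by (subst sum.reindex) (use assms in \<open>auto intro!: inj_onI simp: o_def\<close>)
  finally show ?thesis by (simp add: sum.distrib)
qed

lemma P1_ins:
  assumes "finite A" "i \<notin> A" "Y \<subseteq> A"
  shows "P1 Pm k (insert i A) Y = Pm i k * P1 Pm k A Y"
    and "P1 Pm k (insert i A) (insert i Y) = (1 - Pm i k) * P1 Pm k A Y"
proof -
  have f: "finite Y" using assms finite_subset by blast
  have iY: "i \<notin> Y" using assms by blast
  have "insert i A - Y = insert i (A - Y)" using assms by auto
  then show "P1 Pm k (insert i A) Y = Pm i k * P1 Pm k A Y"
    unfolding P1_def using assms by (simp add: prod.insert)
  have "insert i A - insert i Y = A - Y" using assms by auto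
  then show "P1 Pm k (insert i A) (insert i Y) = (1 - Pm i k) * P1 Pm k A Y"
    unfolding P1_def using assms f iY by (simp add: prod.insert)
qed

lemma P0_ins:
  assumes "finite A" "i \<notin> A" "Y \<subseteq> A"
  shows "P0 Pf k (insert i A) Y = (1 - Pf i k) * P0 Pf k A Y"
    and "P0 Pf k (insert i A) (insert i Y) = Pf i k * P0 Pf k A Y"
proof -
  have f: "finite Y" using assms finite_subset by blast
  have iY: "i \<notin> Y" using assms by blast
  have "insert i A - Y = insert i (A - Y)" using assms by auto
  then show "P0 Pf k (insert i A) Y = (1 - Pf i k) * P0 Pf k A Y"
    unfolding P0_def using assms by (simp add: prod.insert)
  have "insert i A - insert i Y = A - Y" using assms by auto
  then show "P0 Pf k (insert i A) (insert i Y) = Pf i k * P0 Pf k A Y"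
    unfolding P0_def using assms f iY by (simp add: prod.insert)
qed

lemma max2: "max (x1::real) y1 + max x2 y2 \<ge> max (x1 + x2) (y1 + y2)"
  by (simp add: max_def)

lemma Uk_single:
  "Uk Pf Pm Tc pi0 gamma k {i} = max (theta2 gamma pi0 k * Pm i k) (theta1 Tc pi0 k * (1 - Pf i k))
     + max (theta2 gamma pi0 k * (1 - Pm i k)) (theta1 Tc pi0 k * Pf i k)"
  unfolding Uk_def P0_def P1_def by (simp add: Pow_insert)

lemma Uk_single_ge:
  "Uk Pf Pm Tc pi0 gamma k {i} \<ge> theta1 Tc pi0 k"
  "Uk Pf Pm Tc pi0 gamma k {i} \<ge> theta2 gamma pi0 k"
  unfolding Uk_single by (simp_all add: max_def algebra_simps)

lemma Uk_mono:
  assumes "finite A" "i \<notin> A"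
  shows "Uk Pf Pm Tc pi0 gamma k (insert i A) \<ge> Uk Pf Pm Tc pi0 gamma k A"
proof (cases "A = {}")
  case True
  then show ?thesis using Uk_single_ge(2) unfolding Uk_def by simp
next
  case False
  let ?t1 = "theta1 Tc pi0 k" and ?t2 = "theta2 gamma pi0 k"
  have "Uk Pf Pm Tc pi0 gamma k (insert i A) =
     (\<Sum>Y\<in>Pow A. max (?t2 * P1 Pm k (insert i A) Y) (?t1 * P0 Pf k (insert i A) Y)
        + max (?t2 * P1 Pm k (insert i A) (insert i Y)) (?t1 * P0 Pf k (insert i A) (insert i Y)))"
    unfolding Uk_def using sum_Pow_insert[OF assms] by simp
  also have "\<dots> = (\<Sum>Y\<in>Pow A. max (?t2 * (Pm i k * P1 Pm k A Y)) (?t1 * ((1 - Pf i k) * P0 Pf k A Y))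
        + max (?t2 * ((1 - Pm i k) * P1 Pm k A Y)) (?t1 * (Pf i k * P0 Pf k A Y)))"
    by (rule sum.cong) (use assms P1_ins P0_ins in auto)
  also have "\<dots> \<ge> (\<Sum>Y\<in>Pow A. max (?t2 * P1 Pm k A Y) (?t1 * P0 Pf k A Y))"
  proof (rule sum_mono)
    fix Y
    have "max (?t2 * (Pm i k * P1 Pm k A Y)) (?t1 * ((1 - Pf i k) * P0 Pf k A Y))
        + max (?t2 * ((1 - Pm i k) * P1 Pm k A Y)) (?t1 * (Pf i k * P0 Pf k A Y))
        \<ge> max (?t2 * (Pm i k * P1 Pm k A Y) + ?t2 * ((1 - Pm i k) * P1 Pm k A Y))
              (?t1 * ((1 - Pf i k) * P0 Pf k A Y) + ?t1 * (Pf i k * P0 Pf k A Y))"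
      by (rule max2)
    moreover have "?t2 * (Pm i k * P1 Pm k A Y) + ?t2 * ((1 - Pm i k) * P1 Pm k A Y) = ?t2 * P1 Pm k A Y"
      by (simp add: algebra_simps)
    moreover have "?t1 * ((1 - Pf i k) * P0 Pf k A Y) + ?t1 * (Pf i k * P0 Pf k A Y) = ?t1 * P0 Pf k A Y"
      by (simp add: algebra_simps)
    ultimately show "max (?t2 * P1 Pm k A Y) (?t1 * P0 Pf k A Y) \<le>
        max (?t2 * (Pm i k * P1 Pm k A Y)) (?t1 * ((1 - Pf i k) * P0 Pf k A Y))
        + max (?t2 * ((1 - Pm i k) * P1 Pm k A Y)) (?t1 * (Pf i k * P0 Pf k A Y))" by simp
  qed
  finally show ?thesis unfolding Uk_def using False by simp
qed

lemma sum_P0: assumes "finite A" shows "sum (P0 Pf k A) (Pow A) = 1"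
  using prod_add[OF assms, of "\<lambda>i. Pf i k" "\<lambda>i. 1 - Pf i k"] unfolding P0_def by simp

lemma sum_P1: assumes "finite A" shows "sum (P1 Pm k A) (Pow A) = 1"
  using prod_add[OF assms, of "\<lambda>i. 1 - Pm i k" "\<lambda>i. Pm i k"] unfolding P1_def by simp

lemma Uk_upper:
  assumes "finite A" "\<forall>i\<in>A. 0 \<le> Pf i k \<and> Pf i k \<le> 1" "\<forall>i\<in>A. 0 \<le> Pm i k \<and> Pm i k \<le> 1"
    "theta1 Tc pi0 k \<ge> 0" "theta2 gamma pi0 k \<ge> 0"
  shows "Uk Pf Pm Tc pi0 gamma k A \<le> theta1 Tc pi0 k + theta2 gamma pi0 k"
proof (cases "A = {}")
  case True then show ?thesis using assms unfolding Uk_def by simp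
next
  case False
  let ?t1 = "theta1 Tc pi0 k" and ?t2 = "theta2 gamma pi0 k"
  have "(\<Sum>Y\<in>Pow A. max (?t2 * P1 Pm k A Y) (?t1 * P0 Pf k A Y))
      \<le> (\<Sum>Y\<in>Pow A. ?t2 * P1 Pm k A Y + ?t1 * P0 Pf k A Y)"
  proof (rule sum_mono)
    fix Y assume Y: "Y \<in> Pow A"
    have "P1 Pm k A Y \<ge> 0" unfolding P1_def using assms Y
      by (intro mult_nonneg_nonneg prod_nonneg) auto
    moreover have "P0 Pf k A Y \<ge> 0" unfolding P0_def using assms Y
      by (intro mult_nonneg_nonneg prod_nonneg) auto
    ultimately show "max (?t2 * P1 Pm k A Y) (?t1 * P0 Pf k A Y) \<le> ?t2 * P1 Pm k A Y + ?t1 * P0 Pf k A Y"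
      using assms by (simp add: max_def)
  qed
  also have "\<dots> = ?t2 * sum (P1 Pm k A) (Pow A) + ?t1 * sum (P0 Pf k A) (Pow A)"
    by (simp add: sum.distrib sum_distrib_left)
  also have "\<dots> = ?t2 + ?t1" using sum_P0 sum_P1 assms by simp
  finally show ?thesis unfolding Uk_def using False by simp
qed


lemma Uk_ge_theta2:
  assumes "finite A" shows "Uk Pf Pm Tc pi0 gamma k A \<ge> theta2 gamma pi0 k"
  using assms
proof (induction A rule: finite_induct)
  case empty then show ?case unfolding Uk_def by simp
next
  case (insert x F)
  then show ?case using Uk_mono[OF insert(1,2), of Pf Pm Tc pi0 gamma k] by linarith
qed

lemma greedy_mono:
  assumes "greedy_run M (Uk Pf Pm Tc pi0 gamma) S cs S'" "\<forall>k<M. finite (S k)"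
  shows "total M (Uk Pf Pm Tc pi0 gamma) S \<le> total M (Uk Pf Pm Tc pi0 gamma) S'"
  using assms
proof (induction rule: greedy_run.induct)
  case (greedy_nil S) then show ?case by simp
next
  case (greedy_cons k c S cs S')
  let ?S1 = "S(k := insert (fst c) (S k))"
  have "total M (Uk Pf Pm Tc pi0 gamma) S \<le> total M (Uk Pf Pm Tc pi0 gamma) ?S1"
    unfolding total_def
  proof (rule sum_mono)
    fix k' assume "k' \<in> {..<M}"
    then show "Uk Pf Pm Tc pi0 gamma k' (S k') \<le> Uk Pf Pm Tc pi0 gamma k' (?S1 k')"
      using Uk_mono[of "S k" "fst c"] greedy_cons by (cases "k' = k") auto
  qed
  also have "\<dots> \<le> total M (Uk Pf Pm Tc pi0 gamma) S'"
  proof -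
    have "\<forall>ka<M. finite (?S1 ka)" using greedy_cons by auto
    then show ?thesis using greedy_cons.IH by blast
  qed
  finally show ?case .
qed

lemma avg_lemma:
  fixes z :: "nat \<Rightarrow> real"
  assumes "finite G" "T \<subseteq> G" "\<forall>k\<in>T. \<forall>k'\<in>G - T. z k' \<le> z k"
  shows "real (card T) * sum z G \<le> real (card G) * sum z T"
proof -
  have fT: "finite T" using assms finite_subset by blast
  have sG: "sum z G = sum z T + sum z (G - T)"
    using assms by (metis add.commute sum.subset_diff)
  have cG: "card G = card T + card (G - T)"
    using assms fT by (metis card_Diff_subset le_add_diff_inverse card_mono)
  have "real (card T) * sum z (G - T) = (\<Sum>k\<in>T. \<Sum>k'\<in>G - T. z k')"
    by (simp add: sum_distrib_left)
  also have "\<dots> \<le> (\<Sum>k\<in>T. \<Sum>k'\<in>G - T. z k)"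
    by (intro sum_mono) (use assms in auto)
  also have "\<dots> = real (card (G - T)) * sum z T"
    by (simp add: sum_distrib_left sum_distrib_right mult.commute)
  finally have "real (card T) * sum z (G - T) \<le> real (card (G - T)) * sum z T" .
  then show ?thesis unfolding sG cG by (simp add: algebra_simps)
qed

lemma group_bound:
  fixes z s :: "nat \<Rightarrow> real"
  assumes "finite G" "T \<subseteq> G" "\<forall>k\<in>T. \<forall>k'\<in>G - T. z k' \<le> z k" "\<forall>k\<in>G. z k > 0"
    "\<forall>k\<in>T. s k \<ge> z k" "G \<noteq> {}"
    "m \<le> (if T = {} then 0 else (real (card T) / real (card G)) * (Min ((\<lambda>k. s k / z k) ` T) - 1))"
  shows "m * sum z G \<le> sum (\<lambda>k. s k - z k) T"
proof -
  have fT: "finite T" using assms finite_subset by blast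
  have zG: "sum z G \<ge> 0" using assms by (intro sum_nonneg) auto
  show ?thesis
  proof (cases "T = {}")
    case True
    then have "m \<le> 0" using assms by simp
    then show ?thesis using zG True by (simp add: mult_nonpos_nonneg)
  next
    case False
    define \<rho> where "\<rho> = Min ((\<lambda>k. s k / z k) ` T)"
    have rk: "\<rho> \<le> s k / z k" if "k \<in> T" for k unfolding \<rho>_def using fT that by simp
    have r1: "\<rho> \<ge> 1" unfolding \<rho>_def using fT False assms
      by (subst Min_ge_iff) auto
    have "sum (\<lambda>k. (\<rho> - 1) * z k) T \<le> sum (\<lambda>k. s k - z k) T"
    proof (rule sum_mono)
      fix k assume k: "k \<in> T"
      have zk: "z k > 0" using assms k by auto
      have "\<rho> * z k \<le> s k" using rk[OF k] zk by (simp add: pos_le_divide_eq)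
      then show "(\<rho> - 1) * z k \<le> s k - z k" by (simp add: algebra_simps)
    qed
    then have A: "(\<rho> - 1) * sum z T \<le> sum (\<lambda>k. s k - z k) T" by (simp add: sum_distrib_left)
    have cG: "real (card G) > 0" using assms card_gt_0_iff by auto
    have av: "real (card T) * sum z G \<le> real (card G) * sum z T" by (rule avg_lemma) (use assms in auto)
    have "m * sum z G \<le> (real (card T) / real (card G)) * (\<rho> - 1) * sum z G"
    proof -
      have "m \<le> (real (card T) / real (card G)) * (\<rho> - 1)" using assms(7) False \<rho>_def by simp
      then show ?thesis using zG by (rule mult_right_mono)
    qed
    also have "\<dots> = (\<rho> - 1) * (real (card T) * sum z G) / real (card G)" by simp
    also have "\<dots> \<le> (\<rho> - 1) * (real (card G) * sum z T) / real (card G)"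
      using av r1 cG by (intro divide_right_mono mult_left_mono) auto
    also have "\<dots> = (\<rho> - 1) * sum z T" using cG by simp
    finally show ?thesis using A by linarith
  qed
qed


lemma matching_construct:
  fixes N M :: nat and l g :: "nat \<Rightarrow> nat" and T :: "nat \<Rightarrow> nat set"
  assumes l_sum: "(\<Sum>i<N. l i) \<ge> M"
    and gN: "\<forall>k<M. g k < N"
    and Tg: "\<forall>i<N. T i \<subseteq> grp M g i \<and> card (T i) \<le> l i"
  shows "\<exists>h. inj_on h {..<M} \<and> h ` {..<M} \<subseteq> copies N l \<and>
     (\<forall>k\<in>(\<Union>i<N. T i). fst (h k) = g k)"
proof -
  define TT where "TT = (\<Union>i<N. T i)"
  have cop: "copies N l = Sigma {..<N} (\<lambda>i. {..<l i})" unfolding copies_def by auto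
  have fcop: "finite (copies N l)" unfolding cop by auto
  have ccop: "card (copies N l) = (\<Sum>i<N. l i)" unfolding cop by simp
  have fT: "finite (T i)" if "i < N" for i
    using Tg that finite_subset[of "T i" "{..<M}"] unfolding grp_def by auto
  have "\<forall>i. \<exists>f. i < N \<longrightarrow> f ` T i \<subseteq> {i} \<times> {..<l i} \<and> inj_on f (T i)"
  proof
    fix i
    show "\<exists>f. i < N \<longrightarrow> f ` T i \<subseteq> {i} \<times> {..<l i} \<and> inj_on f (T i)"
    proof (cases "i < N")
      case True
      have "card (T i) \<le> card ({i} \<times> {..<l i})" using Tg True by (simp add: card_cartesian_product)
      then show ?thesis using card_le_inj[OF fT[OF True], of "{i} \<times> {..<l i}"] by auto
    qed simp
  qed
  then obtain F where F: "\<And>i. i < N \<Longrightarrow> F i ` T i \<subseteq> {i} \<times> {..<l i} \<and> inj_on (F i) (T i)"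
    by metis
  define h1 where "h1 k = F (g k) k" for k
  have TTg: "k \<in> T (g k) \<and> g k < N" if "k \<in> TT" for k
    using that Tg unfolding TT_def grp_def by auto
  have h1c: "h1 k \<in> {g k} \<times> {..<l (g k)}" if "k \<in> TT" for k
    using F TTg[OF that] unfolding h1_def by blast
  have h1cop: "h1 ` TT \<subseteq> copies N l" using h1c TTg unfolding copies_def by fastforce
  have inj1: "inj_on h1 TT"
  proof (rule inj_onI)
    fix k k' assume k: "k \<in> TT" and k': "k' \<in> TT" and e: "h1 k = h1 k'"
    have "g k = g k'" using h1c[OF k] h1c[OF k'] e by auto
    then show "k = k'" using F TTg[OF k] TTg[OF k'] e unfolding h1_def inj_on_def by metis
  qed
  have TTM: "TT \<subseteq> {..<M}" using Tg unfolding TT_def grp_def by auto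
  have fTT: "finite TT" using TTM finite_subset by blast
  define R where "R = {..<M} - TT"
  define B where "B = copies N l - h1 ` TT"
  have "card B = card (copies N l) - card TT"
    unfolding B_def using card_Diff_subset[OF finite_imageI[OF fTT] h1cop] card_image[OF inj1] by simp
  moreover have "card R = M - card TT" unfolding R_def using card_Diff_subset[OF fTT TTM] by simp
  ultimately have "card R \<le> card B" using ccop l_sum by simp
  then obtain h2 where h2: "h2 ` R \<subseteq> B" "inj_on h2 R"
    using card_le_inj[of R B] fcop unfolding R_def B_def by auto
  define h where "h k = (if k \<in> TT then h1 k else h2 k)" for k
  have "inj_on h {..<M}"
  proof (rule inj_onI)
    fix k k' assume k: "k \<in> {..<M}" and k': "k' \<in> {..<M}" and e: "h k = h k'"
    show "k = k'"
    proof (cases "k \<in> TT"; cases "k' \<in> TT")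
      assume "k \<in> TT" "k' \<in> TT" then show ?thesis using e inj1 unfolding h_def inj_on_def by auto
    next
      assume a: "k \<in> TT" "k' \<notin> TT"
      then have "h2 k' \<in> B" using h2 k' unfolding R_def by auto
      then show ?thesis using e a unfolding h_def B_def by (metis DiffD2 image_eqI)
    next
      assume a: "k \<notin> TT" "k' \<in> TT"
      then have "h2 k \<in> B" using h2 k unfolding R_def by auto
      then show ?thesis using e a unfolding h_def B_def by (metis DiffD2 image_eqI)
    next
      assume "k \<notin> TT" "k' \<notin> TT" then show ?thesis using e h2 k k' unfolding h_def inj_on_def R_def by auto
    qed
  qed
  moreover have "h ` {..<M} \<subseteq> copies N l"
    using h1cop h2 unfolding h_def B_def R_def by auto
  moreover have "\<forall>k\<in>TT. fst (h k) = g k" using h1c unfolding h_def mem_Times_iff by auto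
  ultimately show ?thesis unfolding TT_def by blast
qed


theorem proposition2:
  fixes N M :: nat and l :: "nat \<Rightarrow> nat"
    and Pf Pm :: "nat \<Rightarrow> nat \<Rightarrow> real" and Tc :: real
    and pi0 gamma :: "nat \<Rightarrow> real"
    and g :: "nat \<Rightarrow> nat" and T :: "nat \<Rightarrow> nat set" and Sout :: "nat \<Rightarrow> nat set"
  defines "U \<equiv> Uk Pf Pm Tc pi0 gamma"
  assumes M_pos: "0 < M"
    and l_le: "\<forall>i<N. l i \<le> M"
    and l_sum: "(\<Sum>i<N. l i) \<ge> M"
    and Pf: "\<forall>i<N. \<forall>k<M. 0 \<le> Pf i k \<and> Pf i k \<le> 1"
    and Pm: "\<forall>i<N. \<forall>k<M. 0 \<le> Pm i k \<and> Pm i k \<le> 1"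
    and Tc: "0 \<le> Tc" "Tc < 1"
    and pi0: "\<forall>k<M. 0 \<le> pi0 k \<and> pi0 k \<le> 1"
    and gamma: "\<forall>k<M. gamma k > 0"
    and part: "valid_partition N M U g"
    and top: "valid_top N M l U g T"
    and alg: "alg_output N M l U Sout"
  shows "total M U Sout \<ge> mu N M l U g T / 2 * OPT N M l U"
proof -
  define Z where "Z k = Uzero N U k" for k
  have Npos: "N > 0" using l_sum M_pos by (cases N) auto
  have t1: "theta1 Tc pi0 k \<ge> 0" if "k < M" for k
    unfolding theta1_def using Tc pi0 that by simp
  have t2: "theta2 gamma pi0 k \<ge> 0" if "k < M" for k
    unfolding theta2_def using gamma pi0 that by (simp add: less_imp_le)
  have tmax: "max (theta1 Tc pi0 k) (theta2 gamma pi0 k) > 0" if "k < M" for k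
  proof (cases "pi0 k = 0")
    case True then show ?thesis unfolding theta2_def using gamma that by (simp add: less_max_iff_disj)
  next
    case False then have "pi0 k > 0" using pi0 that by (simp add: less_le)
    then show ?thesis unfolding theta1_def using Tc by (simp add: less_max_iff_disj)
  qed
  have Ufin: "U k A \<ge> 0" if "k < M" "finite A" for k A
  proof -
    have "Uk Pf Pm Tc pi0 gamma k A \<ge> theta2 gamma pi0 k" using that(2) by (rule Uk_ge_theta2)
    then show ?thesis using t2[OF that(1)] unfolding U_def by linarith
  qed
  have Zge: "Z k \<ge> max (theta1 Tc pi0 k) (theta2 gamma pi0 k)" if "k < M" for k
    unfolding Z_def Uzero_def using Npos Uk_single_ge unfolding U_def
    by (subst Min_ge_iff) auto
  have Zpos: "Z k > 0" if "k < M" for k using Zge[OF that] tmax[OF that] by linarith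
  have Zle: "Z k \<le> U k {i}" if "i < N" for k i
    unfolding Z_def Uzero_def using that by (intro Min_le) auto
  have Uup: "U k A \<le> 2 * Z k" if "k < M" "A \<subseteq> {..<N}" for k A
  proof -
    have fA: "finite A" using that(2) finite_subset by blast
    have "U k A \<le> theta1 Tc pi0 k + theta2 gamma pi0 k" unfolding U_def
      by (rule Uk_upper[OF fA]) (use that Pf Pm t1 t2 in auto)
    then show ?thesis using Zge[OF that(1)] by linarith
  qed
  have Ustar_eq: "Ustar N U k = U k {g k}" if "k < M" for k
    unfolding Ustar_def using part that unfolding valid_partition_def
    by (intro Max_eqI) auto
  have OPT_le: "OPT N M l U \<le> 2 * (\<Sum>k<M. Z k)"
  proof -
    let ?X = "{total M U S | S. feasible N M l S}"
    have sub: "?X \<subseteq> (total M U) ` (PiE {..<M} (\<lambda>_. Pow {..<N}))"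
    proof
      fix x assume "x \<in> ?X"
      then obtain S where S: "x = total M U S" "feasible N M l S" by auto
      define S' where "S' k = (if k < M then S k else undefined)" for k
      have "total M U S' = total M U S" unfolding total_def S'_def by simp
      moreover have "S' \<in> PiE {..<M} (\<lambda>_. Pow {..<N})"
        using S(2) unfolding feasible_def S'_def PiE_def extensional_def by auto
      ultimately show "x \<in> (total M U) ` (PiE {..<M} (\<lambda>_. Pow {..<N}))" using S by (metis image_eqI)
    qed
    have fin: "finite ?X" by (rule finite_subset[OF sub]) (auto intro: finite_PiE)
    have "total M U (\<lambda>_. {}) \<in> ?X" unfolding feasible_def by auto
    then have ne: "?X \<noteq> {}" by blast
    have "\<forall>x\<in>?X. x \<le> 2 * (\<Sum>k<M. Z k)"
    proof
      fix x assume "x \<in> ?X"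
      then obtain S where S: "x = total M U S" "feasible N M l S" by auto
      have "total M U S \<le> (\<Sum>k<M. 2 * Z k)" unfolding total_def
        using S(2) Uup unfolding feasible_def by (intro sum_mono) auto
      then show "x \<le> 2 * (\<Sum>k<M. Z k)" using S by (simp add: sum_distrib_left)
    qed
    then show ?thesis unfolding OPT_def using fin ne by (subst Max_le_iff) auto
  qed
  obtain Mt ord Sg where Mt: "max_weight_matching N M l U Mt"
    and gr: "greedy_run M U (\<lambda>k. {i. \<exists>j. ((i, j), k) \<in> Mt}) ord Sg"
    and out: "if (\<exists>k<M. U k {..<N} > total M U Sg)
         then (\<exists>ks<M. (\<forall>k<M. U k {..<N} \<le> U ks {..<N}) \<and>
                      Sout = (\<lambda>k. if k = ks then {..<N} else {}))
         else Sout = Sg"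
    using alg unfolding alg_output_def by blast
  define S0 where "S0 k = {i. \<exists>j. ((i, j), k) \<in> Mt}" for k
  have ism: "is_matching N M l Mt" using Mt unfolding max_weight_matching_def by blast
  have Mtsub: "Mt \<subseteq> copies N l \<times> {..<M}" using ism unfolding is_matching_def by blast
  have S0sub: "S0 k \<subseteq> {..<N}" for k using Mtsub unfolding S0_def copies_def by auto
  have finS0: "\<forall>k<M. finite (S0 k)" using S0sub finite_subset by blast
  have G: "total M U S0 \<le> total M U Sg"
    using greedy_mono[of M Pf Pm Tc pi0 gamma S0 ord Sg] gr finS0 unfolding U_def S0_def by blast
  have fcop: "finite (copies N l)"
  proof -
    have "copies N l = Sigma {..<N} (\<lambda>i. {..<l i})" unfolding copies_def by auto
    then show ?thesis by auto
  qed
  have finMt: "finite Mt" using Mtsub fcop finite_subset by blast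
  have W: "mweight U Mt \<le> total M U S0"
  proof -
    have S0eq: "S0 (snd p) = {fst (fst p)}" if "p \<in> Mt" for p
    proof -
      obtain i j k where p: "p = ((i, j), k)" by (metis prod.collapse)
      have "S0 k = {i}" unfolding S0_def using ism that p unfolding is_matching_def by blast
      then show ?thesis using p by simp
    qed
    have injs: "inj_on snd Mt"
      using ism unfolding is_matching_def inj_on_def by (metis prod.collapse)
    have "mweight U Mt = (\<Sum>p\<in>Mt. U (snd p) (S0 (snd p)))"
      unfolding mweight_def by (rule sum.cong) (auto simp: S0eq)
    also have "\<dots> = (\<Sum>k\<in>snd ` Mt. U k (S0 k))"
      using sum.reindex[OF injs, of "\<lambda>k. U k (S0 k)"] by simp
    also have "\<dots> \<le> (\<Sum>k<M. U k (S0 k))"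
      by (rule sum_mono2) (use Mtsub finS0 Ufin in auto)
    finally show ?thesis unfolding total_def .
  qed
  have gN: "\<forall>k<M. g k < N" using part unfolding valid_partition_def by blast
  have Tg: "\<forall>i<N. T i \<subseteq> grp M g i \<and> card (T i) \<le> l i" using top unfolding valid_top_def by auto
  obtain h where h: "inj_on h {..<M}" "h ` {..<M} \<subseteq> copies N l"
    "\<forall>k\<in>(\<Union>i<N. T i). fst (h k) = g k"
    using matching_construct[OF l_sum gN Tg] by blast
  define TT where "TT = (\<Union>i<N. T i)"
  define Mt' where "Mt' = (\<lambda>k. (h k, k)) ` {..<M}"
  have "is_matching N M l Mt'"
    unfolding is_matching_def Mt'_def using h(1,2) unfolding inj_on_def by (auto, metis prod.inject, metis prod.inject)
  then have W2: "mweight U Mt' \<le> mweight U Mt" using Mt unfolding max_weight_matching_def by blast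
  have mw': "mweight U Mt' = (\<Sum>k<M. U k {fst (h k)})"
    unfolding mweight_def Mt'_def by (subst sum.reindex) (auto intro: inj_onI)
  have TTM: "TT \<subseteq> {..<M}" using Tg unfolding TT_def grp_def by auto
  have fT: "finite (T i)" if "i < N" for i
    using Tg that finite_subset[of "T i" "{..<M}"] unfolding grp_def by auto
  define s where "s k = Ustar N U k" for k
  have sZ: "s k \<ge> Z k" if "k < M" for k
    unfolding s_def using Ustar_eq[OF that] Zle gN that by auto
  have L1: "(\<Sum>k<M. Z k) + (\<Sum>k\<in>TT. s k - Z k) \<le> (\<Sum>k<M. U k {fst (h k)})"
  proof -
    have "(\<Sum>k<M. Z k + (if k \<in> TT then s k - Z k else 0)) \<le> (\<Sum>k<M. U k {fst (h k)})"
    proof (rule sum_mono)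
      fix k assume k: "k \<in> {..<M}"
      show "Z k + (if k \<in> TT then s k - Z k else 0) \<le> U k {fst (h k)}"
      proof (cases "k \<in> TT")
        case True then show ?thesis using h(3) Ustar_eq k unfolding TT_def s_def by auto
      next
        case False
        have "fst (h k) < N" using h(2) k unfolding copies_def by auto
        then show ?thesis using False Zle by auto
      qed
    qed
    moreover have "(\<Sum>k<M. (if k \<in> TT then s k - Z k else 0)) = (\<Sum>k\<in>TT. s k - Z k)"
      using sum.inter_restrict[of "{..<M}" "\<lambda>k. s k - Z k" TT] TTM by (simp add: Int_absorb1)
    ultimately show ?thesis by (simp add: sum.distrib)
  qed
  define Cs where "Cs = {(if T i = {} then 0 else lam M l g i * (rho N U T i - 1)) | i.
                              i < N \<and> card (grp M g i) > 0}"
  define m where "m = Min Cs"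
  have mu_eq: "mu N M l U g T = 1 + m" unfolding mu_def m_def Cs_def by simp
  have finCs: "finite Cs"
  proof -
    have "Cs \<subseteq> (\<lambda>i. if T i = {} then 0 else lam M l g i * (rho N U T i - 1)) ` {..<N}"
      unfolding Cs_def by auto
    then show ?thesis using finite_subset by blast
  qed
  have grpfin: "finite (grp M g i)" for i unfolding grp_def by auto
  have "g 0 < N \<and> card (grp M g (g 0)) > 0"
    using gN M_pos grpfin card_gt_0_iff unfolding grp_def by fastforce
  then have neCs: "Cs \<noteq> {}" unfolding Cs_def by blast
  have rho1: "rho N U T i \<ge> 1" if "i < N" "T i \<noteq> {}" for i
  proof -
    have "\<forall>k\<in>T i. Ustar N U k / Uzero N U k \<ge> 1"
    proof
      fix k assume k: "k \<in> T i"
      then have kM: "k < M" using Tg that unfolding grp_def by auto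
      show "Ustar N U k / Uzero N U k \<ge> 1" using sZ[OF kM] Zpos[OF kM] unfolding s_def Z_def by simp
    qed
    then show ?thesis unfolding rho_def using fT[OF that(1)] that(2) by (subst Min_ge_iff) auto
  qed
  have m0: "m \<ge> 0" unfolding m_def using finCs neCs
  proof (subst Min_ge_iff)
    show "\<forall>a\<in>Cs. 0 \<le> a"
    proof
      fix a assume "a \<in> Cs"
      then obtain i where i: "i < N" "a = (if T i = {} then 0 else lam M l g i * (rho N U T i - 1))"
        unfolding Cs_def by blast
      show "0 \<le> a"
      proof (cases "T i = {}")
        case False
        have "lam M l g i \<ge> 0" unfolding lam_def by simp
        then show ?thesis using i rho1[OF i(1) False] False by simp
      qed (use i in simp)
    qed
  qed auto
  have pergrp: "m * sum Z (grp M g i) \<le> sum (\<lambda>k. s k - Z k) (T i)" if i: "i < N" for i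
  proof (cases "grp M g i = {}")
    case True then show ?thesis using Tg i by auto
  next
    case False
    have cT: "card (T i) = min (l i) (card (grp M g i))" using top i unfolding valid_top_def by blast
    have "(if T i = {} then 0 else lam M l g i * (rho N U T i - 1)) \<in> Cs"
      unfolding Cs_def using False grpfin i card_gt_0_iff by blast
    then have "m \<le> (if T i = {} then 0 else lam M l g i * (rho N U T i - 1))"
      unfolding m_def using finCs by simp
    then have mle: "m \<le> (if T i = {} then 0 else (real (card (T i)) / real (card (grp M g i))) *
       (Min ((\<lambda>k. s k / Z k) ` T i) - 1))"
      unfolding lam_def rho_def s_def Z_def cT by simp
    show ?thesis
    proof (rule group_bound[OF grpfin _ _ _ _ False mle])
      show "T i \<subseteq> grp M g i" using Tg i by blast
      show "\<forall>k\<in>T i. \<forall>k'\<in>grp M g i - T i. Z k' \<le> Z k" using top i unfolding valid_top_def Z_def by blast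
      show "\<forall>k\<in>grp M g i. 0 < Z k" using Zpos unfolding grp_def by auto
      show "\<forall>k\<in>T i. Z k \<le> s k" using sZ Tg i unfolding grp_def by blast
    qed
  qed
  have disjT: "\<forall>i\<in>{..<N}. \<forall>j\<in>{..<N}. i \<noteq> j \<longrightarrow> T i \<inter> T j = {}"
    using Tg unfolding grp_def by blast
  have disjG: "\<forall>i\<in>{..<N}. \<forall>j\<in>{..<N}. i \<noteq> j \<longrightarrow> grp M g i \<inter> grp M g j = {}"
    unfolding grp_def by blast
  have sTT: "(\<Sum>k\<in>TT. s k - Z k) = (\<Sum>i<N. \<Sum>k\<in>T i. s k - Z k)"
    unfolding TT_def using sum.UNION_disjoint[of "{..<N}" T "\<lambda>k. s k - Z k"] fT disjT by simp
  have UG: "{..<M} = (\<Union>i<N. grp M g i)" using gN unfolding grp_def by auto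
  have sM: "(\<Sum>k<M. Z k) = (\<Sum>i<N. \<Sum>k\<in>grp M g i. Z k)"
    unfolding UG using sum.UNION_disjoint[of "{..<N}" "grp M g" Z] grpfin disjG by simp
  have L2: "m * (\<Sum>k<M. Z k) \<le> (\<Sum>k\<in>TT. s k - Z k)"
    unfolding sTT sM sum_distrib_left by (rule sum_mono) (use pergrp in \<open>auto simp: sum_distrib_left\<close>)
  have ALGg: "(1 + m) * (\<Sum>k<M. Z k) \<le> total M U Sg"
    using L1 L2 mw' W2 W G by (simp add: algebra_simps)
  have ALG: "(1 + m) * (\<Sum>k<M. Z k) \<le> total M U Sout"
  proof (cases "\<exists>k<M. U k {..<N} > total M U Sg")
    case True
    then obtain k0 where k0: "k0 < M" "U k0 {..<N} > total M U Sg" by blast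
    from True out obtain ks where ks: "ks < M" "\<forall>k<M. U k {..<N} \<le> U ks {..<N}"
      "Sout = (\<lambda>k. if k = ks then {..<N} else {})" by auto
    have "U ks (Sout ks) \<le> total M U Sout"
      unfolding total_def using ks(1) Ufin ks(3)
      by (intro member_le_sum) auto
    then have "U ks {..<N} \<le> total M U Sout" using ks(3) by simp
    then show ?thesis using ks(2) k0 ALGg by fastforce
  next
    case False then show ?thesis using out ALGg by simp
  qed
  have "mu N M l U g T / 2 * OPT N M l U \<le> (1 + m) / 2 * (2 * (\<Sum>k<M. Z k))"
    unfolding mu_eq using OPT_le m0 by (intro mult_left_mono) auto
  also have "\<dots> = (1 + m) * (\<Sum>k<M. Z k)" by simp
  finally show ?thesis using ALG by linarith
qed
end
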